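(* For a graph $G=(V,E)$ and $\tau\ge1$, let $Q_{\mathrm{LP\text{-}Del\text{-}N}}(G,\tau)$ be the optimal value of the linear program $$\max\ -\sum_{v\in V}x_v\quad\text{s.t.}\quad y_e\ge1-x_{v'}-x_{v''}\ \ \forall e=(v',v'')\in E,\qquad \sum_{e\in E(v)}y_e\le\tau\ \ \forall v\in V,\qquad x_v,y_e\in[0,1].$$ Then: (1) for fixed $G$, $Q_{\mathrm{LP\text{-}Del\text{-}N}}(G,\tau)$ is non-decreasing in $\tau$ and equals $0$ for $\tau\ge\deg(G)$; (2) for any node-neighboring graphs $G,G'$, $|Q_{\mathrm{LP\text{-}Del\text{-}N}}(G,\tau)-Q_{\mathrm{LP\text{-}Del\text{-}N}}(G',\tau)|\le1$; (3) for node-neighboring $G,G'$ with $G\subseteq G'$, $Q_{\mathrm{LP\text{-}Del\text{-}N}}(G,\tau)\ge Q_{\mathrm{LP\text{-}Del\text{-}N}}(G',\tau)$.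
   Context: Graphs are finite, simple, undirected; $E(v)$ is the set of edges incident to $v$ and $\deg(G)$ is the maximum degree. $G\subseteq G'$ means $G$ is obtained from $G'$ by deleting a set of nodes with all incident edges; $G,G'$ are node-neighboring if one is obtained from the other by deleting a single node with its incident edges. *)

theory Defs
  imports Complex_Main
begin

type_synonym 'a graph = "'a set \<times> 'a set set"

definition verts :: "'a graph \<Rightarrow> 'a set" where "verts G = fst G"
definition edges :: "'a graph \<Rightarrow> 'a set set" where "edges G = snd G"

definition wf_graph :: "'a graph \<Rightarrow> bool" where
  "wf_graph G \<longleftrightarrow> finite (verts G) \<and>
     (\<forall>e\<in>edges G. \<exists>u v. e = {u, v} \<and> u \<noteq> v \<and> u \<in> verts G \<and> v \<in> verts G)"

definition inc_edges :: "'a graph \<Rightarrow> 'a \<Rightarrow> 'a set set" where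
  "inc_edges G v = {e \<in> edges G. v \<in> e}"

text \<open>Maximum degree (0 for the empty graph).\<close>
definition max_deg :: "'a graph \<Rightarrow> nat" where
  "max_deg G = Max (insert 0 ((\<lambda>v. card (inc_edges G v)) ` verts G))"

definition del_node :: "'a graph \<Rightarrow> 'a \<Rightarrow> 'a graph" where
  "del_node G v = (verts G - {v}, {e \<in> edges G. v \<notin> e})"

definition node_neighboring :: "'a graph \<Rightarrow> 'a graph \<Rightarrow> bool" where
  "node_neighboring G G' \<longleftrightarrow>
     (\<exists>v\<in>verts G'. G = del_node G' v) \<or> (\<exists>v\<in>verts G. G' = del_node G v)"

definition lp_feasible :: "'a graph \<Rightarrow> real \<Rightarrow> ('a \<Rightarrow> real) \<Rightarrow> ('a set \<Rightarrow> real) \<Rightarrow> bool" where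
  "lp_feasible G \<tau> x y \<longleftrightarrow>
     (\<forall>u\<in>verts G. \<forall>w\<in>verts G. {u, w} \<in> edges G \<longrightarrow> y {u, w} \<ge> 1 - x u - x w) \<and>
     (\<forall>v\<in>verts G. (\<Sum>e\<in>inc_edges G v. y e) \<le> \<tau>) \<and>
     (\<forall>v\<in>verts G. 0 \<le> x v \<and> x v \<le> 1) \<and>
     (\<forall>e\<in>edges G. 0 \<le> y e \<and> y e \<le> 1)"

definition Q_LP_Del_N :: "'a graph \<Rightarrow> real \<Rightarrow> real" where
  "Q_LP_Del_N G \<tau> = Sup {- (\<Sum>v\<in>verts G. x v) | x y. lp_feasible G \<tau> x y}"

end

theory Submission
  imports Defs
begin

definition SS :: "'a graph \<Rightarrow> real \<Rightarrow> real set" where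
  "SS G \<tau> = {- (\<Sum>v\<in>verts G. x v) | x y. lp_feasible G \<tau> x y}"

lemma Q_SS: "Q_LP_Del_N G \<tau> = Sup (SS G \<tau>)"
  unfolding Q_LP_Del_N_def SS_def by simp

lemma SS_ne: "1 \<le> \<tau> \<Longrightarrow> SS G \<tau> \<noteq> {}"
proof -
  assume "1 \<le> \<tau>"
  hence "lp_feasible G \<tau> (\<lambda>_. 1) (\<lambda>_. 0)"
    unfolding lp_feasible_def by auto
  thus ?thesis unfolding SS_def by blast
qed

lemma SS_le0: "s \<in> SS G \<tau> \<Longrightarrow> s \<le> 0"
proof -
  assume "s \<in> SS G \<tau>"
  then obtain x y where s: "s = - (\<Sum>v\<in>verts G. x v)" and f: "lp_feasible G \<tau> x y"
    unfolding SS_def by blast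
  have "(\<Sum>v\<in>verts G. x v) \<ge> 0" using f unfolding lp_feasible_def
    by (intro sum_nonneg) auto
  thus ?thesis using s by simp
qed

lemma SS_bdd: "bdd_above (SS G \<tau>)"
  using SS_le0 by (meson bdd_aboveI)

lemma Sup_cmp:
  fixes A B :: "real set"
  assumes "\<forall>a\<in>A. \<exists>b\<in>B. a \<le> b + c" "A \<noteq> {}" "bdd_above B"
  shows "Sup A \<le> Sup B + c"
proof (rule cSup_least[OF assms(2)])
  fix a assume "a \<in> A"
  then obtain b where "b \<in> B" "a \<le> b + c" using assms(1) by blast
  moreover have "b \<le> Sup B" using cSup_upper[OF \<open>b \<in> B\<close> assms(3)] .
  ultimately show "a \<le> Sup B + c" by linarith
qed

lemma fin_edges: "wf_graph G \<Longrightarrow> finite (edges G)"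
proof -
  assume w: "wf_graph G"
  have "edges G \<subseteq> Pow (verts G)" using w unfolding wf_graph_def by fastforce
  moreover have "finite (Pow (verts G))" using w unfolding wf_graph_def by simp
  ultimately show ?thesis by (rule finite_subset)
qed

lemma part1: "\<tau>1 \<le> \<tau>2 \<Longrightarrow> 1 \<le> \<tau>1 \<Longrightarrow> Q_LP_Del_N G \<tau>1 \<le> Q_LP_Del_N G \<tau>2"
proof -
  assume a: "\<tau>1 \<le> \<tau>2" "1 \<le> \<tau>1"
  have "\<forall>s\<in>SS G \<tau>1. \<exists>b\<in>SS G \<tau>2. s \<le> b + 0"
  proof
    fix s assume "s \<in> SS G \<tau>1"
    then obtain x y where s: "s = - (\<Sum>v\<in>verts G. x v)" and f: "lp_feasible G \<tau>1 x y"
      unfolding SS_def by blast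
    have "lp_feasible G \<tau>2 x y" using f a unfolding lp_feasible_def by force
    hence "s \<in> SS G \<tau>2" using s unfolding SS_def by blast
    thus "\<exists>b\<in>SS G \<tau>2. s \<le> b + 0" by auto
  qed
  from Sup_cmp[OF this SS_ne[OF a(2)] SS_bdd] show ?thesis by (simp add: Q_SS)
qed

lemma part2:
  assumes w: "wf_graph G" and t: "1 \<le> \<tau>" "real (max_deg G) \<le> \<tau>"
  shows "Q_LP_Del_N G \<tau> = 0"
proof -
  have fe: "finite (edges G)" using fin_edges[OF w] .
  have "lp_feasible G \<tau> (\<lambda>_. 0) (\<lambda>_. 1)"
    unfolding lp_feasible_def
  proof (intro conjI ballI)
    fix v assume v: "v \<in> verts G"
    have fi: "finite (inc_edges G v)" using fe unfolding inc_edges_def by simp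
    have "card (inc_edges G v) \<le> max_deg G"
      unfolding max_deg_def
    proof (rule Max_ge)
      have "finite (verts G)" using w unfolding wf_graph_def by blast
      then show "finite (insert 0 ((\<lambda>v. card (inc_edges G v)) ` verts G))" by simp
      show "card (inc_edges G v) \<in> insert 0 ((\<lambda>v. card (inc_edges G v)) ` verts G)"
        using v by blast
    qed
    thus "(\<Sum>e\<in>inc_edges G v. (1::real)) \<le> \<tau>" using t by simp
  qed auto
  hence "- (\<Sum>v\<in>verts G. (\<lambda>_. 0::real) v) \<in> SS G \<tau>" unfolding SS_def by blast
  hence "0 \<in> SS G \<tau>" by simp
  hence "0 \<le> Sup (SS G \<tau>)" by (rule cSup_upper[OF _ SS_bdd])
  moreover have "Sup (SS G \<tau>) \<le> 0" by (rule cSup_least[OF SS_ne[OF t(1)] SS_le0])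
  ultimately show ?thesis by (simp add: Q_SS)
qed

lemma part3:
  assumes w: "wf_graph G'" and t: "1 \<le> \<tau>" and v: "v \<in> verts G'" and G: "G = del_node G' v"
  shows "Q_LP_Del_N G' \<tau> \<le> Q_LP_Del_N G \<tau>" "Q_LP_Del_N G \<tau> \<le> Q_LP_Del_N G' \<tau> + 1"
proof -
  have vG: "verts G = verts G' - {v}" and eG: "edges G = {e \<in> edges G'. v \<notin> e}"
    using G unfolding del_node_def verts_def edges_def by auto
  have fe: "finite (edges G')" using fin_edges[OF w] .
  have fv: "finite (verts G')" using w unfolding wf_graph_def by simp
  have incG: "\<And>u. inc_edges G u = {e \<in> inc_edges G' u. v \<notin> e}"
    unfolding inc_edges_def eG by auto
  have "\<forall>s\<in>SS G' \<tau>. \<exists>b\<in>SS G \<tau>. s \<le> b + 0"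
  proof
    fix s assume "s \<in> SS G' \<tau>"
    then obtain x y where s: "s = - (\<Sum>v\<in>verts G'. x v)" and f: "lp_feasible G' \<tau> x y"
      unfolding SS_def by blast
    have f2: "lp_feasible G \<tau> x y"
      unfolding lp_feasible_def
    proof (intro conjI ballI)
      fix u assume u: "u \<in> verts G"
      have "(\<Sum>e\<in>inc_edges G u. y e) \<le> (\<Sum>e\<in>inc_edges G' u. y e)"
        apply (rule sum_mono2)
        using fe f unfolding incG inc_edges_def lp_feasible_def by (auto simp: eG)
      also have "\<dots> \<le> \<tau>" using f u vG unfolding lp_feasible_def by auto
      finally show "(\<Sum>e\<in>inc_edges G u. y e) \<le> \<tau>" .
    qed (use f vG eG in \<open>auto simp: lp_feasible_def\<close>)
    have "(\<Sum>v\<in>verts G'. x v) = x v + (\<Sum>v\<in>verts G. x v)"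
      unfolding vG using fv v by (simp add: sum.remove)
    moreover have "x v \<ge> 0" using f v unfolding lp_feasible_def by auto
    ultimately have "s \<le> - (\<Sum>v\<in>verts G. x v) + 0" using s by simp
    moreover have "- (\<Sum>v\<in>verts G. x v) \<in> SS G \<tau>" using f2 unfolding SS_def by blast
    ultimately show "\<exists>b\<in>SS G \<tau>. s \<le> b + 0" by blast
  qed
  from Sup_cmp[OF this SS_ne[OF t] SS_bdd]
  show "Q_LP_Del_N G' \<tau> \<le> Q_LP_Del_N G \<tau>" by (simp add: Q_SS)
  have "\<forall>s\<in>SS G \<tau>. \<exists>b\<in>SS G' \<tau>. s \<le> b + 1"
  proof
    fix s assume "s \<in> SS G \<tau>"
    then obtain x y where s: "s = - (\<Sum>v\<in>verts G. x v)" and f: "lp_feasible G \<tau> x y"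
      unfolding SS_def by blast
    define x' where "x' = x(v := 1)"
    define y' where "y' = (\<lambda>e. if v \<in> e then 0 else y e)"
    have f2: "lp_feasible G' \<tau> x' y'"
      unfolding lp_feasible_def
    proof (intro conjI ballI impI)
      fix a b assume a: "a \<in> verts G'" and b: "b \<in> verts G'" and e: "{a, b} \<in> edges G'"
      have ab: "a \<noteq> b" using e w unfolding wf_graph_def
        by (metis doubleton_eq_iff insert_absorb2)
      show "1 - x' a - x' b \<le> y' {a, b}"
      proof (cases "a = v \<or> b = v")
        case True
        have y0: "y' {a, b} = 0" using True unfolding y'_def by auto
        have xa: "0 \<le> x a" if "a \<in> verts G" for a
          using f that unfolding lp_feasible_def by blast
        show ?thesis
        proof (cases "a = v")
          case True
          then have "b \<in> verts G" using ab b vG by blast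
          then have "x' b \<ge> 0" using xa True ab unfolding x'_def by simp
          then show ?thesis using y0 True unfolding x'_def by simp
        next
          case False
          then have "b = v" using \<open>a = v \<or> b = v\<close> by blast
          have "a \<in> verts G" using False a vG by blast
          then have "x' a \<ge> 0" using xa False unfolding x'_def by simp
          then show ?thesis using y0 \<open>b = v\<close> unfolding x'_def by simp
        qed
      next
        case False
        have ea: "a \<in> verts G" "b \<in> verts G" "{a, b} \<in> edges G"
          using False a b e vG eG by auto
        have "1 - x a - x b \<le> y {a, b}"
          using f ea unfolding lp_feasible_def by blast
        moreover have "x' a = x a" "x' b = x b" "y' {a, b} = y {a, b}"
          using False unfolding x'_def y'_def by auto
        ultimately show ?thesis by simp
      qed
    next
      fix u assume u: "u \<in> verts G'"
      show "(\<Sum>e\<in>inc_edges G' u. y' e) \<le> \<tau>"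
      proof (cases "u = v")
        case True
        then show ?thesis using t unfolding y'_def inc_edges_def by simp
      next
        case False
        have fi: "finite (inc_edges G' u)" using fe unfolding inc_edges_def by simp
        have "(\<Sum>e\<in>inc_edges G' u. y' e) = (\<Sum>e\<in>inc_edges G u. y e)"
          unfolding incG
          apply (rule sum.mono_neutral_cong_right[OF fi])
          unfolding y'_def by auto
        also have "\<dots> \<le> \<tau>" using f u False vG unfolding lp_feasible_def by auto
        finally show ?thesis .
      qed
        next
      fix u assume u: "u \<in> verts G'"
      show "0 \<le> x' u"
      proof (cases "u = v")
        case False
        then have "u \<in> verts G" using u vG by blast
        then show ?thesis using f False unfolding lp_feasible_def x'_def by simp
      qed (simp add: x'_def)
    next
      fix u assume u: "u \<in> verts G'"
      show "x' u \<le> 1"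
      proof (cases "u = v")
        case False
        then have "u \<in> verts G" using u vG by blast
        then show ?thesis using f False unfolding lp_feasible_def x'_def by simp
      qed (simp add: x'_def)
    next
      fix e assume e: "e \<in> edges G'"
      show "0 \<le> y' e"
      proof (cases "v \<in> e")
        case False
        then have "e \<in> edges G" using e eG by blast
        then show ?thesis using f False unfolding lp_feasible_def y'_def by simp
      qed (simp add: y'_def)
    next
      fix e assume e: "e \<in> edges G'"
      show "y' e \<le> 1"
      proof (cases "v \<in> e")
        case False
        then have "e \<in> edges G" using e eG by blast
        then show ?thesis using f False unfolding lp_feasible_def y'_def by simp
      qed (simp add: y'_def)
    qed
    have "(\<Sum>v\<in>verts G'. x' v) = x' v + (\<Sum>v\<in>verts G. x' v)"
      unfolding vG using fv v by (simp add: sum.remove)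
    also have "(\<Sum>v\<in>verts G. x' v) = (\<Sum>v\<in>verts G. x v)"
      unfolding x'_def vG by (rule sum.cong) auto
    finally have "s \<le> - (\<Sum>v\<in>verts G'. x' v) + 1" using s by (simp add: x'_def)
    moreover have "- (\<Sum>v\<in>verts G'. x' v) \<in> SS G' \<tau>" using f2 unfolding SS_def by blast
    ultimately show "\<exists>b\<in>SS G' \<tau>. s \<le> b + 1" by blast
  qed
  from Sup_cmp[OF this SS_ne[OF t] SS_bdd]
  show "Q_LP_Del_N G \<tau> \<le> Q_LP_Del_N G' \<tau> + 1" by (simp add: Q_SS)
qed

theorem mainTheorem6:
  shows
   "(\<forall>(G::'a graph) \<tau>1 \<tau>2. wf_graph G \<and> 1 \<le> \<tau>1 \<and> \<tau>1 \<le> \<tau>2 \<longrightarrow>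
        Q_LP_Del_N G \<tau>1 \<le> Q_LP_Del_N G \<tau>2)
  \<and> (\<forall>(G::'a graph) \<tau>. wf_graph G \<and> 1 \<le> \<tau> \<and> real (max_deg G) \<le> \<tau> \<longrightarrow>
        Q_LP_Del_N G \<tau> = 0)
  \<and> (\<forall>(G::'a graph) G' \<tau>. wf_graph G \<and> wf_graph G' \<and> node_neighboring G G' \<and> 1 \<le> \<tau> \<longrightarrow>
        \<bar>Q_LP_Del_N G \<tau> - Q_LP_Del_N G' \<tau>\<bar> \<le> 1)
  \<and> (\<forall>(G::'a graph) G' \<tau>. wf_graph G \<and> wf_graph G' \<and> 1 \<le> \<tau> \<and>
        (\<exists>v\<in>verts G'. G = del_node G' v) \<longrightarrow>
        Q_LP_Del_N G \<tau> \<ge> Q_LP_Del_N G' \<tau>)"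
proof (intro conjI allI impI)
  fix G G' :: "'a graph" and \<tau> :: real
  assume a: "wf_graph G \<and> wf_graph G' \<and> node_neighboring G G' \<and> 1 \<le> \<tau>"
  then consider (l) "\<exists>v\<in>verts G'. G = del_node G' v" | (r) "\<exists>v\<in>verts G. G' = del_node G v"
    unfolding node_neighboring_def by blast
  then show "\<bar>Q_LP_Del_N G \<tau> - Q_LP_Del_N G' \<tau>\<bar> \<le> 1"
  proof cases
    case l
    then obtain v where "v \<in> verts G'" "G = del_node G' v" by blast
    then have "Q_LP_Del_N G' \<tau> \<le> Q_LP_Del_N G \<tau>" "Q_LP_Del_N G \<tau> \<le> Q_LP_Del_N G' \<tau> + 1"
      using part3[of G' \<tau> v G] a by simp_all
    then show ?thesis by linarith
  next
    case r
    then obtain v where "v \<in> verts G" "G' = del_node G v" by blast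
    then have "Q_LP_Del_N G \<tau> \<le> Q_LP_Del_N G' \<tau>" "Q_LP_Del_N G' \<tau> \<le> Q_LP_Del_N G \<tau> + 1"
      using part3[of G \<tau> v G'] a by simp_all
    then show ?thesis by linarith
  qed
next
  fix G :: "'a graph" and t1 t2 :: real
  assume "wf_graph G \<and> 1 \<le> t1 \<and> t1 \<le> t2"
  then show "Q_LP_Del_N G t1 \<le> Q_LP_Del_N G t2" using part1[of t1 t2 G] by simp
next
  fix G :: "'a graph" and t :: real
  assume "wf_graph G \<and> 1 \<le> t \<and> real (max_deg G) \<le> t"
  then show "Q_LP_Del_N G t = 0" using part2[of G t] by simp
next
  fix G G' :: "'a graph" and t :: real
  assume a: "wf_graph G \<and> wf_graph G' \<and> 1 \<le> t \<and> (\<exists>v\<in>verts G'. G = del_node G' v)"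
  then obtain v where "v \<in> verts G'" "G = del_node G' v" by blast
  then show "Q_LP_Del_N G' t \<le> Q_LP_Del_N G t" using part3(1)[of G' t v G] a by simp
qed

end
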